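(* Let $p\geq 5$ be a prime and $r$ a positive integer such that $3$ does not divide $p^r+1$, and let $A(x)=x^{p^r+2}$ on $\mathbb{F}_{p^{2r}}$. For every $a\in\mathbb{F}_{p^{2r}}^*$, the function $\Pi_a(x)=2ax^{p^r+1}+a^{p^r}x^2$ on $\mathbb{F}_{p^{2r}}$ (which differs from the difference function $\Delta_{A,a}(x)=A(x+a)-A(x)$ by an affine function) is EA-equivalent to $x^2$.
   Context: An additive function on $\mathbb{F}_{p^n}$ is one satisfying $L(x+y)=L(x)+L(y)$ for all $x,y$; an affine function is an additive function plus a constant. Two functions $f_1,f_2:\mathbb{F}_{p^n}\to\mathbb{F}_{p^n}$ are extended affine (EA) equivalent if there exist affine functions $l_1,l_2,l_3$ with $l_1,l_2$ permutations of $\mathbb{F}_{p^n}$ such that $f_1(x)=l_1(f_2(l_2(x)))+l_3(x)$ for all $x$. *)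

theory Defs
  imports Main "HOL-Computational_Algebra.Primes"
begin

definition additive :: "('a::field \<Rightarrow> 'a) \<Rightarrow> bool" where
  "additive L \<longleftrightarrow> (\<forall>x y. L (x + y) = L x + L y)"

definition affine :: "('a::field \<Rightarrow> 'a) \<Rightarrow> bool" where
  "affine f \<longleftrightarrow> (\<exists>L c. additive L \<and> (\<forall>x. f x = L x + c))"

definition EA_equivalent :: "('a::field \<Rightarrow> 'a) \<Rightarrow> ('a \<Rightarrow> 'a) \<Rightarrow> bool" where
  "EA_equivalent f1 f2 \<longleftrightarrow>
     (\<exists>l1 l2 l3. affine l1 \<and> affine l2 \<and> affine l3 \<and> bij l1 \<and> bij l2 \<and>
        (\<forall>x. f1 x = l1 (f2 (l2 x)) + l3 x))"

end

theory Submission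
  imports Defs "HOL-Number_Theory.Residues" "HOL-Computational_Algebra.Polynomial"
begin

lemma CHAR_eq_p:
  fixes p k :: nat
  assumes "prime p" "k > 0" "card (UNIV :: 'a::{field,finite} set) = p ^ k"
  shows "CHAR('a) = p"
proof -
  have pc: "prime CHAR('a)"
    by (rule prime_CHAR_semidom[OF finite_imp_CHAR_pos]) simp
  have "CHAR('a) dvd p ^ k" using CHAR_dvd_CARD[where 'a='a] assms(3) by simp
  hence "CHAR('a) dvd p" using pc prime_dvd_power by blast
  thus ?thesis using pc assms(1) primes_dvd_imp_eq by blast
qed

lemma fermat_field:
  fixes x :: "'a::{field,finite}"
  shows "x ^ card (UNIV :: 'a set) = x"
proof (cases "x = 0")
  case False
  have "x * (\<Prod>y\<in>UNIV-{0}. x * y) = x * x ^ (card (UNIV :: 'a set) - 1) * \<Prod>(UNIV-{0})"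
    by (simp add: prod.distrib mult_ac)
  also have "x * x ^ (card (UNIV :: 'a set) - 1) = x ^ Suc (card (UNIV :: 'a set) - 1)"
    by (subst power_Suc) auto
  also have "Suc (card (UNIV :: 'a set) - 1) = card (UNIV :: 'a set)"
    using finite_UNIV_card_ge_0[where ?'a = 'a] by simp
  also have "(\<Prod>y\<in>UNIV-{0}. x * y) = (\<Prod>y\<in>UNIV-{0}. y)"
    by (rule prod.reindex_bij_witness[of _ "\<lambda>y. y / x" "\<lambda>y. x * y"]) (use False in auto)
  finally show ?thesis
    by simp
qed (use finite_UNIV_card_ge_0[where ?'a = 'a] in auto)

lemma fermat_units:
  fixes x :: "'a::{field,finite}"
  assumes "x \<noteq> 0"
  shows "x ^ (card (UNIV :: 'a set) - 1) = 1"
proof -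
  have "x * x ^ (card (UNIV :: 'a set) - 1) = x ^ Suc (card (UNIV :: 'a set) - 1)" by simp
  also have "Suc (card (UNIV :: 'a set) - 1) = card (UNIV :: 'a set)"
    using finite_UNIV_card_ge_0[where ?'a = 'a] by simp
  finally have "x * x ^ (card (UNIV :: 'a set) - 1) = x * 1" using fermat_field[of x] by simp
  thus ?thesis using assms by simp
qed

lemma cube_root_exists:
  assumes "3 dvd (card (UNIV :: 'a::{field,finite} set) - 1)"
    and "card (UNIV :: 'a set) \<ge> 4"
  shows "\<exists>w::'a. w \<noteq> 1 \<and> w ^ 3 = 1"
proof -
  define n where "n = card (UNIV :: 'a set)"
  define m where "m = (n - 1) div 3"
  have m3: "3 * m = n - 1" using assms(1) unfolding m_def n_def by simp
  have mpos: "m > 0" using assms(2) m3 unfolding n_def by simp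
  define P :: "'a poly" where "P = monom 1 m + [:-1:]"
  have degP: "degree P = m" unfolding P_def using mpos
    by (subst degree_add_eq_left) (simp_all add: degree_monom_eq)
  have "P \<noteq> 0" using degP mpos by auto
  hence cb: "card {x. poly P x = 0} \<le> m" using card_poly_roots_bound degP by metis
  have "\<exists>u. u \<noteq> 0 \<and> poly P u \<noteq> 0"
  proof (rule ccontr)
    assume "\<not> ?thesis"
    hence "UNIV - {0} \<subseteq> {x. poly P x = 0}" by auto
    hence "card (UNIV - {0::'a}) \<le> card {x. poly P x = 0}"
      by (intro card_mono) auto
    moreover have "card (UNIV - {0::'a}) = n - 1" unfolding n_def by (simp add: card_Diff_singleton)
    ultimately show False using cb m3 mpos by linarith
  qed
  then obtain u :: 'a where u: "u \<noteq> 0" "poly P u \<noteq> 0" by blast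
  have "u ^ m \<noteq> 1" using u(2) unfolding P_def by (simp add: poly_monom)
  moreover have "(u ^ m) ^ 3 = 1"
    using fermat_units[OF u(1)] m3 unfolding n_def by (simp add: power_mult[symmetric] mult.commute)
  ultimately show ?thesis by blast
qed

theorem mainTheorem2:
  fixes p r :: nat and a :: "'a::{field,finite}"
  assumes "prime p" and "p \<ge> 5" and "r > 0"
    and "\<not> (3 dvd (p ^ r + 1))"
    and "card (UNIV :: 'a set) = p ^ (2 * r)"
    and "a \<noteq> 0"
  shows "EA_equivalent (\<lambda>x::'a. 2 * a * x ^ (p ^ r + 1) + a ^ (p ^ r) * x ^ 2) (\<lambda>x. x ^ 2)"
proof -
  define q where "q = p ^ r"
  define F :: "'a \<Rightarrow> 'a" where "F x = x ^ q" for x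
  have charp: "CHAR('a) = p" using CHAR_eq_p[of p "2*r"] assms by simp
  have Fadd: "F (x + y) = F x + F y" for x y
    unfolding F_def q_def
    by (rule freshmans_dream') (use charp assms(1) in auto)
  have Fmult: "F (x * y) = F x * F y" for x y unfolding F_def by (simp add: power_mult_distrib)
  have FF: "F (F x) = x" for x
  proof -
    have "F (F x) = x ^ (q * q)" unfolding F_def by (simp add: power_mult)
    also have "q * q = card (UNIV :: 'a set)" using assms(5) unfolding q_def
      by (metis power_add mult_2)
    finally show ?thesis using fermat_field by simp
  qed
  have F0: "F 0 = 0" unfolding F_def q_def using assms(1) by (simp add: prime_gt_0_nat)
  have Fneg: "F (- x) = - F x" for x using Fadd[of x "-x"] F0 by (simp add: add_eq_0_iff)
  have Fsub: "F (x - y) = F x - F y" for x y using Fadd[of x "-y"] Fneg by simp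
  have F1: "F 1 = 1" unfolding F_def by simp
  have F2: "F 2 = 2" using Fadd[of 1 1] F1 by (simp add: one_add_one)
  have Fnz: "F x \<noteq> 0" if "x \<noteq> 0" for x using that FF F0 by metis
  have of_nat_zero: "(of_nat n :: 'a) = 0 \<longleftrightarrow> p dvd n" for n
    using of_nat_eq_0_iff_char_dvd[where 'a='a] charp by simp
  have three: "(3::'a) \<noteq> 0"
  proof
    assume "(3::'a) = 0"
    hence "(of_nat 3 :: 'a) = 0" by simp
    hence "p dvd 3" using of_nat_zero by blast
    thus False using assms(2) by (auto dest: dvd_imp_le)
  qed
  have p3: "\<not> 3 dvd p"
  proof
    assume "3 dvd p"
    hence "p = 3" using assms(1) primes_dvd_imp_eq[of 3 p] by simp
    thus False using assms(2) by simp
  qed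
  have pr3: "prime (3::nat)" by simp
  have nq: "\<not> 3 dvd q" using p3 prime_dvd_power[OF pr3, of p r] unfolding q_def by blast
  have qmod: "q mod 3 = 1" using nq assms(4) unfolding q_def[symmetric] by presburger
  have card: "card (UNIV :: 'a set) = q * q" using assms(5) unfolding q_def
    by (metis power_add mult_2)
  have q5: "q \<ge> 5" unfolding q_def using assms(2,3)
    using power_increasing[of 1 r p] by simp
  have "3 dvd (q * q - 1)"
  proof -
    have "(q * q) mod 3 = 1" using qmod by (simp add: mod_mult_eq[symmetric])
    thus ?thesis using q5 by presburger
  qed
  moreover have "q * q \<ge> 4" using mult_le_mono[OF q5 q5] by simp
  ultimately obtain w :: 'a where w: "w \<noteq> 1" "w ^ 3 = 1"
    using cube_root_exists[where 'a='a] card by auto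
  have w2: "w * w + w + 1 = 0"
  proof -
    have "(w - 1) * (w * w + w + 1) = 0" using w(2) by (simp add: algebra_simps power3_eq_cube)
    thus ?thesis using w(1) by simp
  qed
  have Fw: "F w = w"
  proof -
    have "q = 3 * (q div 3) + 1" using qmod by presburger
    hence "w ^ q = (w ^ 3) ^ (q div 3) * w" by (metis power_mult power_Suc2 Suc_eq_plus1)
    thus ?thesis unfolding F_def using w(2) by simp
  qed
  define A where "A = F a"
  have Anz: "A \<noteq> 0" unfolding A_def using Fnz assms(6) by simp
  have FA: "F A = a" unfolding A_def by (simp add: FF)
  have Finv: "F (inverse x) = inverse (F x)" for x
  proof (cases "x = 0")
    case True thus ?thesis using F0 by simp
  next
    case False
    have "F x * F (inverse x) = 1" using Fmult[of x "inverse x"] F1 False by simp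
    thus ?thesis by (simp add: inverse_unique)
  qed
  have Fdiv: "F (x / y) = F x / F y" for x y by (simp add: divide_inverse Fmult Finv)
  define c where "c = w * a / A"
  have Fc: "F c = w * A / a" unfolding c_def by (simp add: Fdiv Fmult Fw FA A_def FF)
  define l2 where "l2 y = y + c * F y" for y
  define al where "al = A * (1 + 2 * w)"
  define be where "be = c * a * (2 + w)"
  define l1 where "l1 z = al * z + be * F z" for z
  have key: "2 * a * (l2 y * F (l2 y)) + A * (l2 y)^2 = l1 (y^2)" for y
  proof -
    define t where "t = F y"
    have Fl2: "F (l2 y) = t + w * A / a * y" unfolding l2_def t_def by (simp add: Fadd Fmult Fc FF)
    have Fy2: "F (y^2) = t^2" unfolding t_def by (simp add: power2_eq_square Fmult)
    have "2 * a * (l2 y * F (l2 y)) + A * (l2 y)^2 - l1 (y^2) = 2 * a * y * t * (w * w + w + 1)"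
      unfolding Fl2 l1_def Fy2 unfolding l2_def t_def[symmetric] c_def al_def be_def
      using assms(6) Anz by (simp add: field_simps power2_eq_square)
    thus ?thesis using w2 by simp
  qed
  have l2add: "l2 (x + y) = l2 x + l2 y" for x y unfolding l2_def by (simp add: Fadd algebra_simps)
  have l1add: "l1 (x + y) = l1 x + l1 y" for x y unfolding l1_def by (simp add: Fadd algebra_simps)
  have l2sub: "l2 (x - y) = l2 x - l2 y" for x y unfolding l2_def by (simp add: Fsub algebra_simps)
  have l1sub: "l1 (x - y) = l1 x - l1 y" for x y unfolding l1_def by (simp add: Fsub algebra_simps)
  have ww: "w * w \<noteq> 1"
  proof
    assume "w * w = 1"
    hence "w ^ 3 = w" by (simp add: power3_eq_cube)
    thus False using w by simp
  qed
  have l2ker: "z = 0" if "l2 z = 0" for z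
  proof -
    have e1: "z = - (c * F z)" using that unfolding l2_def by (simp only: eq_neg_iff_add_eq_0)
    have "F z = - (F c * z)" using arg_cong[OF e1, of F] by (simp add: Fneg Fmult FF)
    hence "z = c * F c * z" using e1 by simp
    also have "c * F c = w * w" unfolding Fc using assms(6) Anz by (simp add: c_def field_simps)
    finally have "(1 - w * w) * z = 0" by (simp add: algebra_simps)
    thus ?thesis using ww by simp
  qed
  have l1ker: "z = 0" if "l1 z = 0" for z
  proof -
    have e1: "al * z = - (be * F z)" using that unfolding l1_def by (simp only: eq_neg_iff_add_eq_0)
    have h: "F al * F z = - (F be * z)" using arg_cong[OF e1, of F] by (simp add: Fneg Fmult FF)
    have "al * F al * z = F al * (al * z)" by (simp only: ac_simps)
    also have "\<dots> = - (be * (F al * F z))" unfolding e1 by (simp only: mult_minus_right ac_simps)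
    also have "\<dots> = be * F be * z" unfolding h by (simp only: mult_minus_right minus_minus ac_simps)
    finally have "al * F al * z = be * F be * z" .
    moreover have "F al = a * (1 + 2 * w)" unfolding al_def by (simp add: Fadd Fmult F1 F2 Fw FA)
    moreover have "F be = w * A / a * A * (2 + w)" unfolding be_def by (simp add: Fadd Fmult F2 Fw Fc A_def)
    ultimately have E1: "(al * (a * (1 + 2 * w)) - be * (w * A / a * A * (2 + w))) * z = 0"
      by (simp add: algebra_simps)
    have E2: "al * (a * (1 + 2 * w)) - be * (w * A / a * A * (2 + w)) = - 3 * a * A * (1 - w)"
    proof -
      have "al * (a * (1 + 2 * w)) - be * (w * A / a * A * (2 + w)) - (- 3 * a * A * (1 - w))
            = a * A * (w * w + w + 1) * (4 - 3 * w - w * w)"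
        unfolding al_def be_def c_def using assms(6) Anz by (simp add: field_simps)
      hence "al * (a * (1 + 2 * w)) - be * (w * A / a * A * (2 + w)) - (- 3 * a * A * (1 - w)) = 0"
        using w2 by (simp only: mult_zero_left mult_zero_right)
      thus ?thesis by (simp only: right_minus_eq)
    qed
    have "(- 3 * a * A * (1 - w)) * z = 0" using E1 unfolding E2 .
    thus ?thesis using three assms(6) Anz w(1) by auto
  qed
  have injl2: "inj l2"
    by (rule injI) (use l2ker l2sub in \<open>metis eq_iff_diff_eq_0\<close>)
  have injl1: "inj l1"
    by (rule injI) (use l1ker l1sub in \<open>metis eq_iff_diff_eq_0\<close>)
  have bl2: "bij l2" using injl2 finite_UNIV_inj_surj[of l2] by (simp add: bij_def)
  have bl1: "bij l1" using injl1 finite_UNIV_inj_surj[of l1] by (simp add: bij_def)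
  define m where "m = inv_into UNIV l2"
  have l2m: "l2 (m x) = x" for x unfolding m_def using bl2 by (simp add: bij_is_surj surj_f_inv_f)
  have madd: "m (x + y) = m x + m y" for x y
    using injl2 l2m l2add by (metis injD)
  have bm: "bij m" unfolding m_def using bl2 by (rule bij_imp_bij_inv)
  have affm: "affine m" unfolding Defs.affine_def Defs.additive_def using madd by (intro exI[of _ m] exI[of _ 0]) simp
  have affl1: "affine l1" unfolding Defs.affine_def Defs.additive_def using l1add by (intro exI[of _ l1] exI[of _ 0]) simp
  have aff0: "affine (\<lambda>x::'a. 0)" unfolding Defs.affine_def Defs.additive_def by (intro exI[of _ "\<lambda>x::'a. 0"] exI[of _ 0]) simp
  have eq: "2 * a * x ^ (p ^ r + 1) + a ^ (p ^ r) * x ^ 2 = l1 ((m x) ^ 2) + 0" for x :: 'a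
  proof -
    have "2 * a * x ^ (p ^ r + 1) + a ^ (p ^ r) * x ^ 2 = 2 * a * (x * F x) + A * x ^ 2"
      unfolding A_def F_def q_def by (simp add: mult.commute)
    also have "\<dots> = l1 ((m x) ^ 2)" using key[of "m x"] by (simp add: l2m)
    finally show ?thesis by simp
  qed
  show ?thesis unfolding EA_equivalent_def
    using affl1 affm aff0 bl1 bm eq by blast
qed

end
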